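(* Let $x\in P$ and $u'\in P'$ with $u'\notin x'^{\perp}$ in $S'$. Then $d(x,u')=3$ in the collinearity graph of $\mathbb{S}$.
   Context: Let $S=(P,L)$ and $S'=(P',L')$ be generalized quadrangles of order $(2,2)$ (every line has 3 points, every point lies on 3 lines, and for each point $x$ and line $l\not\ni x$ exactly one point of $l$ is collinear with $x$), with an isomorphism $x\mapsto x'$ from $S$ to $S'$ (write $u$ for the preimage of $u'\in P'$). In a point-line geometry, $x^{\perp}$ is $x$ together with all points collinear with $x$, and $A^{\perp}=\bigcap_{a\in A}a^{\perp}$. A triad is a set of three pairwise non-collinear points, complete if $|T^{\perp}|=3$. Let $\mathcal{P}=\{(x,y')\in P\times P':y'\in x'^{\perp}\}$ and $\mathcal{L}$ the set of all $3$-subsets $\{(x,u'),(y,v'),(z,w')\}$ of $\mathcal{P}$ where $T=\{x,y,z\}$ (three distinct points) is a line or complete triad of $S$ and $\{u',v',w'\}=T'^{\perp}$ in $S'$ with $u',v',w'$ distinct. The geometry $\mathbb{S}=(\mathbb{P},\mathbb{L})$ has point set $\mathbb{P}=\mathcal{P}\cup P\cup P'$ (disjoint union) and line set $\mathcal{L}\cup\{\{x,(x,u'),u'\}:(x,u')\in\mathcal{P}\}$. *)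

theory Defs
  imports Main "HOL-Library.Extended_Nat"
begin

definition collinear :: "'a set \<Rightarrow> 'a set set \<Rightarrow> 'a \<Rightarrow> 'a \<Rightarrow> bool" where
  "collinear P L x y \<longleftrightarrow> (\<exists>l\<in>L. x \<in> l \<and> y \<in> l)"

definition perp :: "'a set \<Rightarrow> 'a set set \<Rightarrow> 'a \<Rightarrow> 'a set" where
  "perp P L x = {y \<in> P. y = x \<or> collinear P L x y}"

definition perp_set :: "'a set \<Rightarrow> 'a set set \<Rightarrow> 'a set \<Rightarrow> 'a set" where
  "perp_set P L A = {y \<in> P. \<forall>a\<in>A. y \<in> perp P L a}"

definition gq22 :: "'a set \<Rightarrow> 'a set set \<Rightarrow> bool" where
  "gq22 P L \<longleftrightarrow>
     (\<forall>l\<in>L. l \<subseteq> P \<and> card l = 3) \<and>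
     (\<forall>x\<in>P. card {l \<in> L. x \<in> l} = 3) \<and>
     (\<forall>x\<in>P. \<forall>l\<in>L. x \<notin> l \<longrightarrow> (\<exists>!y. y \<in> l \<and> collinear P L x y))"

definition geom_iso :: "'a set \<Rightarrow> 'a set set \<Rightarrow> 'b set \<Rightarrow> 'b set set \<Rightarrow> ('a \<Rightarrow> 'b) \<Rightarrow> bool" where
  "geom_iso P L P' L' f \<longleftrightarrow> bij_betw f P P' \<and> (image f) ` L = L'"

definition triad :: "'a set \<Rightarrow> 'a set set \<Rightarrow> 'a set \<Rightarrow> bool" where
  "triad P L T \<longleftrightarrow> T \<subseteq> P \<and> card T = 3 \<and>
     (\<forall>x\<in>T. \<forall>y\<in>T. x \<noteq> y \<longrightarrow> \<not> collinear P L x y)"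

definition complete_triad :: "'a set \<Rightarrow> 'a set set \<Rightarrow> 'a set \<Rightarrow> bool" where
  "complete_triad P L T \<longleftrightarrow> triad P L T \<and> card (perp_set P L T) = 3"

text \<open>Points of the new geometry: disjoint union of the pairs, P and P'.\<close>
datatype ('a, 'b) bpt = Pt 'a 'b | Old 'a | New 'b

definition calP :: "'a set \<Rightarrow> 'a set set \<Rightarrow> 'b set \<Rightarrow> 'b set set \<Rightarrow> ('a \<Rightarrow> 'b) \<Rightarrow> ('a \<times> 'b) set" where
  "calP P L P' L' f = {(x, y). x \<in> P \<and> y \<in> P' \<and> y \<in> perp P' L' (f x)}"

definition calL :: "'a set \<Rightarrow> 'a set set \<Rightarrow> 'b set \<Rightarrow> 'b set set \<Rightarrow> ('a \<Rightarrow> 'b) \<Rightarrow> ('a, 'b) bpt set set" where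
  "calL P L P' L' f = {{Pt x u, Pt y v, Pt z w} | x y z u v w.
      (x, u) \<in> calP P L P' L' f \<and> (y, v) \<in> calP P L P' L' f \<and> (z, w) \<in> calP P L P' L' f \<and>
      x \<noteq> y \<and> x \<noteq> z \<and> y \<noteq> z \<and> u \<noteq> v \<and> u \<noteq> w \<and> v \<noteq> w \<and>
      ({x, y, z} \<in> L \<or> complete_triad P L {x, y, z}) \<and>
      {u, v, w} = perp_set P' L' (f ` {x, y, z})}"

definition bbP :: "'a set \<Rightarrow> 'a set set \<Rightarrow> 'b set \<Rightarrow> 'b set set \<Rightarrow> ('a \<Rightarrow> 'b) \<Rightarrow> ('a, 'b) bpt set" where
  "bbP P L P' L' f = (\<lambda>(x, u). Pt x u) ` calP P L P' L' f \<union> Old ` P \<union> New ` P'"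

definition bbL :: "'a set \<Rightarrow> 'a set set \<Rightarrow> 'b set \<Rightarrow> 'b set set \<Rightarrow> ('a \<Rightarrow> 'b) \<Rightarrow> ('a, 'b) bpt set set" where
  "bbL P L P' L' f = calL P L P' L' f \<union>
     {{Old x, Pt x u, New u} | x u. (x, u) \<in> calP P L P' L' f}"

definition coll_adj :: "'c set \<Rightarrow> 'c set set \<Rightarrow> 'c \<Rightarrow> 'c \<Rightarrow> bool" where
  "coll_adj Q M a b \<longleftrightarrow> a \<in> Q \<and> b \<in> Q \<and> a \<noteq> b \<and> (\<exists>l\<in>M. a \<in> l \<and> b \<in> l)"

fun walk :: "('c \<Rightarrow> 'c \<Rightarrow> bool) \<Rightarrow> nat \<Rightarrow> 'c \<Rightarrow> 'c \<Rightarrow> bool" where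
  "walk E 0 a b \<longleftrightarrow> a = b"
| "walk E (Suc n) a b \<longleftrightarrow> (\<exists>c. walk E n a c \<and> E c b)"

text \<open>Graph distance (infinity if not connected).\<close>
definition gdist :: "('c \<Rightarrow> 'c \<Rightarrow> bool) \<Rightarrow> 'c \<Rightarrow> 'c \<Rightarrow> enat" where
  "gdist E a b = (INF n\<in>{n. walk E n a b}. enat n)"

end

theory Submission
  imports Defs
begin
lemma calL_no_Old: "l \<in> calL P L P' L' f \<Longrightarrow> Old x \<notin> l"
  unfolding calL_def by auto
lemma calL_no_New: "l \<in> calL P L P' L' f \<Longrightarrow> New x \<notin> l"
  unfolding calL_def by auto

lemma bbL_cases:
  assumes "l \<in> bbL P L P' L' f" "l \<notin> calL P L P' L' f"
  obtains y v where "l = {Old y, Pt y v, New v}" "(y, v) \<in> calP P L P' L' f"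
  using assms unfolding bbL_def by auto

lemma adj_Old:
  assumes "coll_adj (bbP P L P' L' f) (bbL P L P' L' f) (Old x) c"
  shows "\<exists>v. (x, v) \<in> calP P L P' L' f \<and> (c = Pt x v \<or> c = New v)"
proof -
  from assms obtain l where l: "l \<in> bbL P L P' L' f" "Old x \<in> l" "c \<in> l" "c \<noteq> Old x"
    unfolding coll_adj_def by blast
  have "l \<notin> calL P L P' L' f" proof assume "l \<in> calL P L P' L' f" from calL_no_Old[OF this] l(2) show False by contradiction qed
  with l(1) obtain y v where e: "l = {Old y, Pt y v, New v}" "(y, v) \<in> calP P L P' L' f"
    by (rule bbL_cases)
  have "y = x" using l(2) e(1) by simp
  then show ?thesis using l(3,4) e by auto
qed

lemma adj_New:
  assumes "coll_adj (bbP P L P' L' f) (bbL P L P' L' f) c (New u)"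
  shows "\<exists>y. (y, u) \<in> calP P L P' L' f \<and> (c = Pt y u \<or> c = Old y)"
proof -
  from assms obtain l where l: "l \<in> bbL P L P' L' f" "New u \<in> l" "c \<in> l" "c \<noteq> New u"
    unfolding coll_adj_def by blast
  have "l \<notin> calL P L P' L' f" proof assume "l \<in> calL P L P' L' f" from calL_no_New[OF this] l(2) show False by contradiction qed
  with l(1) obtain y v where e: "l = {Old y, Pt y v, New v}" "(y, v) \<in> calP P L P' L' f"
    by (rule bbL_cases)
  have "v = u" using l(2) e(1) by simp
  then show ?thesis using l(3,4) e by auto
qed

lemma coll_adjI: "a \<in> Q \<Longrightarrow> b \<in> Q \<Longrightarrow> a \<noteq> b \<Longrightarrow> l \<in> M \<Longrightarrow> a \<in> l \<Longrightarrow> b \<in> l \<Longrightarrow> coll_adj Q M a b"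
  unfolding coll_adj_def by blast

lemma adj_ON:
  assumes "(y, v) \<in> calP P L P' L' f"
  shows "coll_adj (bbP P L P' L' f) (bbL P L P' L' f) (Old y) (New v)"
    and "coll_adj (bbP P L P' L' f) (bbL P L P' L' f) (New v) (Old y)"
proof -
  have l: "{Old y, Pt y v, New v} \<in> bbL P L P' L' f" using assms unfolding bbL_def by blast
  have "Old y \<in> bbP P L P' L' f" "New v \<in> bbP P L P' L' f"
    using assms unfolding bbP_def calP_def by auto
  then show "coll_adj (bbP P L P' L' f) (bbL P L P' L' f) (Old y) (New v)"
    "coll_adj (bbP P L P' L' f) (bbL P L P' L' f) (New v) (Old y)"
    using coll_adjI[OF _ _ _ l] by auto
qed

theorem lemma4p2:
  fixes P :: "'a set" and L :: "'a set set" and P' :: "'b set" and L' :: "'b set set"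
    and f :: "'a \<Rightarrow> 'b" and x :: 'a and u :: 'b
  assumes "gq22 P L" and "gq22 P' L'" and "geom_iso P L P' L' f"
    and "x \<in> P" and "u \<in> P'" and "u \<notin> perp P' L' (f x)"
  shows "gdist (coll_adj (bbP P L P' L' f) (bbL P L P' L' f)) (Old x) (New u) = 3"
proof -
  let ?E = "coll_adj (bbP P L P' L' f) (bbL P L P' L' f)"
  have bij: "bij_betw f P P'" using assms(3) unfolding geom_iso_def by blast
  have fxP: "f x \<in> P'" using bij assms(4) bij_betwE by blast
  have "u \<in> f ` P" using bij assms(5) unfolding bij_betw_def by blast
  then obtain y where y: "y \<in> P" "f y = u" by blast
  note G = assms(2)[unfolded gq22_def]
  note g1 = G[THEN conjunct1] and g2 = G[THEN conjunct2, THEN conjunct1]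
    and g3 = G[THEN conjunct2, THEN conjunct2]
  have "card {l \<in> L'. u \<in> l} = 3" using g2 assms(5) by blast
  then have "{l \<in> L'. u \<in> l} \<noteq> {}" by (metis card.empty zero_neq_numeral)
  then obtain l where l: "l \<in> L'" "u \<in> l" by blast
  have nc: "\<not> collinear P' L' (f x) u" using assms(5,6) unfolding perp_def by blast
  have "f x \<notin> l" using nc l unfolding collinear_def by blast
  then have "\<exists>!w. w \<in> l \<and> collinear P' L' (f x) w" using g3 fxP l(1) by blast
  then obtain v where v: "v \<in> l" "collinear P' L' (f x) v" by blast
  have vP: "v \<in> P'" using g1 l v by blast
  have cxv: "(x, v) \<in> calP P L P' L' f"
    using v vP assms(4) fxP unfolding calP_def perp_def by blast
  have cyv: "(y, v) \<in> calP P L P' L' f"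
    using v vP y l unfolding calP_def perp_def collinear_def by blast
  have cyu: "(y, u) \<in> calP P L P' L' f"
    using y assms(5) unfolding calP_def perp_def by blast
  have w1: "walk ?E (Suc 0) (Old x) (New v)" using adj_ON(1)[OF cxv] by simp
  have w2: "walk ?E (Suc (Suc 0)) (Old x) (Old y)" using w1 adj_ON(2)[OF cyv]
    by (simp only: walk.simps(2)) blast
  have "walk ?E (Suc (Suc (Suc 0))) (Old x) (New u)" using w2 adj_ON(1)[OF cyu]
    by (simp only: walk.simps(2)) blast
  then have w3: "walk ?E 3 (Old x) (New u)" by (simp only: numeral_3_eq_3)
  have ge: "3 \<le> n" if wn: "walk ?E n (Old x) (New u)" for n
  proof (rule ccontr)
    assume "\<not> 3 \<le> n"
    then have "n = 0 \<or> n = Suc 0 \<or> n = Suc (Suc 0)" by linarith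
    moreover have "n \<noteq> 0" using wn by (cases n) auto
    moreover have "n \<noteq> Suc 0"
    proof
      assume "n = Suc 0"
      then have "?E (Old x) (New u)" using wn by simp
      from adj_Old[OF this] obtain w where "(x, w) \<in> calP P L P' L' f" "New u = New w" by blast
      then show False using assms(6) unfolding calP_def by simp
    qed
    moreover have "n \<noteq> Suc (Suc 0)"
    proof
      assume "n = Suc (Suc 0)"
      then obtain c where c: "?E (Old x) c" "?E c (New u)" using wn by auto
      from adj_Old[OF c(1)] obtain w where w: "(x, w) \<in> calP P L P' L' f" "c = Pt x w \<or> c = New w" by blast
      from adj_New[OF c(2)] obtain z where z: "(z, u) \<in> calP P L P' L' f" "c = Pt z u \<or> c = Old z" by blast
      from w(2) z(2) have "w = u" by auto
      then show False using w(1) assms(6) unfolding calP_def by simp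
    qed
    ultimately show False by blast
  qed
  show ?thesis unfolding gdist_def
  proof (rule antisym)
    show "(INF n\<in>{n. walk ?E n (Old x) (New u)}. enat n) \<le> 3"
      using INF_lower[of 3 "{n. walk ?E n (Old x) (New u)}" enat] w3 by (simp add: numeral_eq_enat)
    show "3 \<le> (INF n\<in>{n. walk ?E n (Old x) (New u)}. enat n)"
      by (rule INF_greatest) (use ge in \<open>auto simp: numeral_eq_enat\<close>)
  qed
qed

end
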